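(* Let $n\ge 3$, $m=\frac{n-2}{n+2}$, $\rho>0$, $\beta>\frac{\rho}{2}$, and $\alpha=\frac{2\beta+\rho}{1-m}$. Let $v$ be a radially symmetric solution of $$\frac{n-1}{m}\Delta v^m+\alpha v+\beta x\cdot\nabla v=0,\quad v>0,\quad\text{in }\mathbb{R}^n,$$ so that $g=v^{\frac{4}{n+2}}dx^2$ is a locally conformally flat non-compact gradient shrinking Yamabe soliton. Then $$\lim_{r\to\infty} r^2 v(r)^{\frac{4}{n+2}}=\frac{(n-1)(n-2)}{\rho}.$$
   Context: $dx^2$ denotes the Euclidean metric on $\mathbb{R}^n$; $v(r)$ denotes the value of $v$ at any point with $|x|=r$. *)

theory Defs
  imports "HOL-Analysis.Analysis"
begin

definition partial :: "'n::finite \<Rightarrow> (real^'n \<Rightarrow> real) \<Rightarrow> real^'n \<Rightarrow> real" where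
  "partial i f x = deriv (\<lambda>t. f (x + t *\<^sub>R axis i 1)) 0"

definition partials_exist :: "(real^'n::finite \<Rightarrow> real) \<Rightarrow> bool" where
  "partials_exist f \<longleftrightarrow> (\<forall>i x. (\<lambda>t. f (x + t *\<^sub>R axis i 1)) differentiable (at 0))"

definition C2 :: "(real^'n::finite \<Rightarrow> real) \<Rightarrow> bool" where
  "C2 f \<longleftrightarrow> continuous_on UNIV f \<and> partials_exist f \<and>
     (\<forall>i. continuous_on UNIV (partial i f) \<and> partials_exist (partial i f) \<and>
          (\<forall>j. continuous_on UNIV (partial j (partial i f))))"

definition laplacian :: "(real^'n::finite \<Rightarrow> real) \<Rightarrow> real^'n \<Rightarrow> real" where
  "laplacian f x = (\<Sum>i\<in>UNIV. partial i (partial i f) x)"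

definition radial_deriv :: "(real^'n::finite \<Rightarrow> real) \<Rightarrow> real^'n \<Rightarrow> real" where
  "radial_deriv f x = (\<Sum>i\<in>UNIV. x $ i * partial i f x)"

end

theory Submission
  imports Defs
begin


lemma partial_has_deriv:
  assumes "partials_exist f"
  shows "((\<lambda>h. f (x + h *\<^sub>R axis i 1)) has_real_derivative partial i f x) (at 0)"
  using assms unfolding partial_def partials_exist_def
  by (simp add: DERIV_deriv_iff_real_differentiable)

lemma partial_eqI:
  assumes "((\<lambda>h. f (x + h *\<^sub>R axis i 1)) has_real_derivative D) (at 0)"
  shows "partial i f x = D"
  using assms unfolding partial_def by (rule DERIV_imp_deriv)

lemma radial_eq:
  assumes "\<forall>x y. norm x = norm y \<longrightarrow> f x = f y"
  shows "f y = f (norm y *\<^sub>R axis i (1::real))"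
  using assms by (metis norm_axis_1 norm_scaleR real_norm_def abs_norm_cancel mult.right_neutral)

lemma norm_two_axes:
  fixes t s :: real
  assumes "j \<noteq> i"
  shows "norm (t *\<^sub>R axis i (1::real) + s *\<^sub>R axis j 1 :: real^'n) = sqrt (t\<^sup>2 + s\<^sup>2)"
proof -
  have "norm (t *\<^sub>R axis i (1::real) + s *\<^sub>R axis j 1 :: real^'n) = sqrt (inner (t *\<^sub>R axis i (1::real) + s *\<^sub>R axis j 1 :: real^'n) (t *\<^sub>R axis i (1::real) + s *\<^sub>R axis j 1))"
    by (rule norm_eq_sqrt_inner)
  also have "\<dots> = sqrt (t\<^sup>2 + s\<^sup>2)"
    using assms by (simp add: inner_add_left inner_add_right inner_axis_axis power2_eq_square)
  finally show ?thesis .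
qed


lemma axis_deriv:
  assumes "partials_exist f"
  shows "DERIV (\<lambda>t. f (t *\<^sub>R axis i 1)) t :> partial i f (t *\<^sub>R axis i 1)"
proof -
  have "((\<lambda>h. f (t *\<^sub>R axis i 1 + h *\<^sub>R axis i 1)) has_real_derivative partial i f (t *\<^sub>R axis i 1)) (at 0)"
    by (rule partial_has_deriv[OF assms])
  hence "((\<lambda>h. f ((h + t) *\<^sub>R axis i 1)) has_real_derivative partial i f (t *\<^sub>R axis i 1)) (at 0)"
    by (simp add: scaleR_add_left add.commute)
  thus ?thesis using DERIV_shift[of "\<lambda>t. f (t *\<^sub>R axis i 1)" _ 0 t] by simp
qed

lemma lap_radial:
  fixes g :: "real^'n \<Rightarrow> real" and i :: 'n
  assumes rad: "\<forall>x y. norm x = norm y \<longrightarrow> g x = g y"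
    and d1: "\<And>t. DERIV (\<lambda>t. g (t *\<^sub>R axis i 1)) t :> p1 t"
    and d2: "\<And>t. DERIV p1 t :> p2 t"
    and t: "t > 0"
  shows "laplacian g (t *\<^sub>R axis i 1) = p2 t + (real CARD('n) - 1) * p1 t / t"
proof -
  define \<psi> where "\<psi> = (\<lambda>t. g (t *\<^sub>R axis i 1))"
  have gnorm: "g y = \<psi> (norm y)" for y
    unfolding \<psi>_def by (rule radial_eq[OF rad])
  have pi: "partial i g (s *\<^sub>R axis i 1) = p1 s" for s
  proof (rule partial_eqI)
    have "DERIV \<psi> (0 + s) :> p1 s" using d1 unfolding \<psi>_def by simp
    hence "((\<lambda>h. \<psi> (h + s)) has_real_derivative p1 s) (at 0)" using DERIV_shift[of \<psi> "p1 s" 0 s] by simp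
    thus "((\<lambda>h. g (s *\<^sub>R axis i 1 + h *\<^sub>R axis i 1)) has_real_derivative p1 s) (at 0)"
      unfolding \<psi>_def by (simp add: scaleR_add_left add.commute)
  qed
  have pii: "partial i (partial i g) (t *\<^sub>R axis i 1) = p2 t"
  proof (rule partial_eqI)
    have "DERIV p1 (0 + t) :> p2 t" using d2 by simp
    hence "((\<lambda>h. p1 (h + t)) has_real_derivative p2 t) (at 0)" using DERIV_shift[of p1 "p2 t" 0 t] by simp
    thus "((\<lambda>h. partial i g (t *\<^sub>R axis i 1 + h *\<^sub>R axis i 1)) has_real_derivative p2 t) (at 0)"
      by (simp add: pi scaleR_add_left[symmetric] add.commute)
  qed
  define R where "R = (\<lambda>s::real. sqrt (t\<^sup>2 + s\<^sup>2))"
  have Rpos: "R s > 0" for s unfolding R_def using t by (simp add: add_pos_nonneg)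
  have Rd: "DERIV R s :> s / R s" for s
  proof -
    have "DERIV R s :> inverse (sqrt (t\<^sup>2 + s\<^sup>2)) / 2 * (0 + 2 * s)"
      unfolding R_def
    proof (rule DERIV_chain2[of sqrt])
      show "DERIV sqrt (t\<^sup>2 + s\<^sup>2) :> inverse (sqrt (t\<^sup>2 + s\<^sup>2)) / 2"
        by (rule DERIV_real_sqrt) (use t in \<open>simp add: add_pos_nonneg\<close>)
      show "DERIV (\<lambda>s. t\<^sup>2 + s\<^sup>2) s :> 0 + 2 * s"
        by (auto intro!: derivative_eq_intros)
    qed
    thus ?thesis unfolding R_def by (simp add: field_simps)
  qed
  have R0: "R 0 = t" unfolding R_def using t by simp
  have pj: "partial j g (t *\<^sub>R axis i 1 + s *\<^sub>R axis j 1) = p1 (R s) * (s / R s)" if "j \<noteq> i" for j s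
  proof (rule partial_eqI)
    have e: "g (t *\<^sub>R axis i 1 + s *\<^sub>R axis j 1 + h *\<^sub>R axis j 1) = \<psi> (R (s + h))" for h
      using norm_two_axes[OF that, of t "s+h"] gnorm
      by (simp add: R_def add.assoc scaleR_add_left[symmetric])
    have "DERIV (\<lambda>x. \<psi> (R x)) (0 + s) :> p1 (R s) * (s / R s)"
      using DERIV_chain2[OF d1[of "R s"] Rd[of s]] unfolding \<psi>_def by simp
    hence "((\<lambda>h. \<psi> (R (h + s))) has_real_derivative p1 (R s) * (s / R s)) (at 0)"
      using DERIV_shift[of "\<lambda>x. \<psi> (R x)" _ 0 s] by simp
    thus "((\<lambda>h. g (t *\<^sub>R axis i 1 + s *\<^sub>R axis j 1 + h *\<^sub>R axis j 1)) has_real_derivative p1 (R s) * (s / R s)) (at 0)"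
      unfolding e by (simp add: add.commute)
  qed
  have pjj: "partial j (partial j g) (t *\<^sub>R axis i 1) = p1 t / t" if "j \<noteq> i" for j
  proof (rule partial_eqI)
    have a: "DERIV (\<lambda>h. p1 (R h)) 0 :> p2 (R 0) * (0 / R 0)"
      using DERIV_chain2[OF d2[of "R 0"] Rd[of 0]] .
    have b: "DERIV (\<lambda>h. h / R h) 0 :> (1 * R 0 - 0 * (0 / R 0)) / (R 0 * R 0)"
      by (rule DERIV_divide[OF DERIV_ident Rd]) (use Rpos[of 0] in auto)
    have "DERIV (\<lambda>h. p1 (R h) * (h / R h)) 0 :> p2 (R 0) * (0 / R 0) * (0 / R 0) + (1 * R 0 - 0 * (0 / R 0)) / (R 0 * R 0) * p1 (R 0)"
      using DERIV_mult[OF a b] by simp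
    hence "DERIV (\<lambda>h. p1 (R h) * (h / R h)) 0 :> p1 t / t"
      using R0 t by simp
    thus "((\<lambda>h. partial j g (t *\<^sub>R axis i 1 + h *\<^sub>R axis j 1)) has_real_derivative p1 t / t) (at 0)"
      by (simp add: pj[OF that])
  qed
  have "laplacian g (t *\<^sub>R axis i 1) = partial i (partial i g) (t *\<^sub>R axis i 1) + (\<Sum>j\<in>UNIV - {i}. partial j (partial j g) (t *\<^sub>R axis i 1))"
    unfolding laplacian_def by (simp add: sum.remove[of UNIV i])
  also have "(\<Sum>j\<in>UNIV - {i}. partial j (partial j g) (t *\<^sub>R axis i 1)) = (\<Sum>j\<in>UNIV - {i}. p1 t / t)"
    by (rule sum.cong) (auto simp: pjj)
  also have "\<dots> = (real CARD('n) - 1) * p1 t / t"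
    by (simp add: card_Diff_singleton of_nat_diff)
  finally show ?thesis using pii by simp
qed

lemma radial_deriv_axis:
  "radial_deriv f (t *\<^sub>R axis i 1) = t * partial i f (t *\<^sub>R axis i 1)"
proof -
  have "\<And>j. (t *\<^sub>R axis i 1) $ j * partial j f (t *\<^sub>R axis i 1) = (if i = j then t * partial i f (t *\<^sub>R axis i 1) else 0)"
    by (simp add: axis_def)
  thus ?thesis unfolding radial_deriv_def by (simp only: sum.delta) simp
qed


lemma alg_P:
  fixes X r f Mv d1 q1 q2 N m \<alpha> \<beta> \<rho> k c1 c2 A :: real
  assumes r: "r > 0" and f: "f > 0" and Mv: "Mv > 0" and m: "m > 0" and c1: "c1 > 0"
    and rel1: "c1 * k\<^sup>2 = c2 * A" and rel2: "\<alpha> = c2*\<rho> + \<beta>*k/m" and rel3: "2*k+1 = N-1"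
    and ode: "c1 * (q2 + (N-1)*q1/r) + \<alpha>*f + \<beta>*(r*d1) = 0"
    and q1: "q1 = m*Mv*d1/f"
  shows "X*(k*(k*Mv + r*q1) + r*(k*q1 + q1 + r*q2)) =
     (c2 * (X*Mv*(A - \<rho>*(r\<^sup>2*f/Mv))) - \<beta>/m * (r\<^sup>2*f/Mv) * (X*(k*Mv + r*q1))) / c1"
proof -
  have q2: "r\<^sup>2 * q2 = -r\<^sup>2*(\<alpha>*f + \<beta>*(r*d1))/c1 - (N-1)*r*q1"
  proof -
    have "c1*q2*r + c1*(N-1)*q1 + \<alpha>*f*r + \<beta>*r\<^sup>2*d1 = (c1 * (q2 + (N-1)*q1/r) + \<alpha>*f + \<beta>*(r*d1)) * r" using r
      by (simp add: field_simps power2_eq_square)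
    hence e1: "c1*q2*r + c1*(N-1)*q1 + \<alpha>*f*r + \<beta>*r\<^sup>2*d1 = 0" using ode by simp
    have "c1*(r\<^sup>2*q2) + c1*(N-1)*r*q1 + \<alpha>*f*r\<^sup>2 + \<beta>*r^3*d1 = r * (c1*q2*r + c1*(N-1)*q1 + \<alpha>*f*r + \<beta>*r\<^sup>2*d1)"
      by (simp add: algebra_simps power2_eq_square power3_eq_cube)
    hence e: "c1*(r\<^sup>2*q2) + c1*(N-1)*r*q1 + \<alpha>*f*r\<^sup>2 + \<beta>*r^3*d1 = 0" using e1 by simp
    have e2: "c1*(r\<^sup>2*q2) = - c1*(N-1)*r*q1 - \<alpha>*f*r\<^sup>2 - \<beta>*r^3*d1" using e by linarith
    have "r\<^sup>2*q2 = (c1*(r\<^sup>2*q2))/c1" using c1 by simp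
    also have "\<dots> = (- c1*(N-1)*r*q1 - \<alpha>*f*r\<^sup>2 - \<beta>*r^3*d1)/c1" using e2 by simp
    also have "\<dots> = -r\<^sup>2*(\<alpha>*f + \<beta>*(r*d1))/c1 - (N-1)*r*q1" using c1
      by (simp add: field_simps power2_eq_square power3_eq_cube)
    finally show ?thesis .
  qed
  have L: "X*(k*(k*Mv + r*q1) + r*(k*q1 + q1 + r*q2)) = X*(k\<^sup>2*Mv + (2*k+1)*r*q1 + r\<^sup>2*q2)"
    by (simp add: algebra_simps power2_eq_square)
  also have "\<dots> = X*(k\<^sup>2*Mv - r\<^sup>2*(\<alpha>*f + \<beta>*(r*d1))/c1)"
    unfolding q2 rel3 using c1 by (simp add: field_simps)
  also have "\<dots> = (c2*A*X*Mv - X*r\<^sup>2*f*(c2*\<rho> + \<beta>*k/m) - \<beta>*X*r^3*d1)/c1"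
    unfolding rel2 rel1[symmetric] using c1 by (simp add: field_simps power2_eq_square power3_eq_cube)
  also have "\<dots> = (c2 * (X*Mv*(A - \<rho>*(r\<^sup>2*f/Mv))) - \<beta>/m * (r\<^sup>2*f/Mv) * (X*(k*Mv + r*q1))) / c1"
    unfolding q1 using f Mv m c1 by (simp add: field_simps power2_eq_square power3_eq_cube)
  finally show ?thesis .
qed


locale yode =
  fixes N m \<rho> \<beta> \<alpha> :: real and \<phi> D1 D2 :: "real \<Rightarrow> real"
  assumes N3: "N \<ge> 3" and mdef: "m = (N-2)/(N+2)" and rho: "\<rho> > 0" and beta: "\<beta> > 0"
    and adef: "\<alpha> = (2*\<beta>+\<rho>)/(1-m)"
    and phipos: "\<And>t. \<phi> t > 0" and d1: "\<And>t. DERIV \<phi> t :> D1 t" and d2: "\<And>t. DERIV D1 t :> D2 t"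
    and ode: "\<And>t. t > 0 \<Longrightarrow> (N-1)/m * (m * (\<phi> t powr m) * ((m-1)*(D1 t)\<^sup>2 + \<phi> t * D2 t)/(\<phi> t)\<^sup>2
                 + (N-1) * (m * (\<phi> t powr m) * D1 t / \<phi> t) / t) + \<alpha> * \<phi> t + \<beta> * (t * D1 t) = 0"
begin

definition "k = (N-2)/2"
definition "c1 = (N-1)/m"
definition "c2 = (N+2)/4"
definition "A = (N-1)*(N-2)"

lemma m_pos: "m > 0" using N3 mdef by simp
lemma m_lt1: "m < 1" using N3 mdef by simp
lemma one_m: "1 - m = 4/(N+2)" using N3 mdef by (simp add: field_simps)
lemma k_pos: "k > 0" using N3 k_def by simp
lemma c1_pos: "c1 > 0" using N3 c1_def m_pos by simp
lemma c2_pos: "c2 > 0" using N3 c2_def by simp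
lemma A_pos: "A > 0" using N3 A_def by simp
lemma rel1: "c1 * k\<^sup>2 = c2 * A"
  unfolding c1_def k_def c2_def A_def unfolding mdef using N3 by (simp add: field_simps power2_eq_square)
lemma rel2: "\<alpha> = c2*\<rho> + \<beta>*k/m"
  unfolding adef one_m c2_def k_def mdef using N3 by (simp add: field_simps)
lemma rel3: "2*k+1 = N-1" unfolding k_def by (simp add: field_simps)
lemma rel4: "(1-m)*k/m = 2"
proof -
  have nz: "N + 2 \<noteq> 0" "N - 2 \<noteq> 0" using N3 by auto
  have "(1-m)*k/m = (4/(N+2)) * ((N-2)/2) / ((N-2)/(N+2))" unfolding one_m unfolding k_def mdef ..
  also have "4/(N+2) * ((N-2)/2) = 2 * ((N-2)/(N+2))" using nz by (simp add: field_simps)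
  also have "(N-2)/(N+2) \<noteq> 0" using nz by simp
  hence "2 * ((N-2)/(N+2)) / ((N-2)/(N+2)) = 2" by (rule nonzero_mult_div_cancel_right)
  finally show ?thesis .
qed

definition "M t = \<phi> t powr m"
definition "p1 t = m * M t * D1 t / \<phi> t"
definition "p2 t = m * M t * ((m-1)*(D1 t)\<^sup>2 + \<phi> t * D2 t)/(\<phi> t)\<^sup>2"

lemma M_pos: "M t > 0" unfolding M_def using phipos[of t] by simp

lemma M_deriv: "DERIV M t :> p1 t"
proof -
  have "DERIV M t :> m * (\<phi> t) powr (m - of_nat 1) * D1 t"
    unfolding M_def by (rule DERIV_fun_powr[OF d1 phipos])
  moreover have "\<phi> t powr (m - of_nat 1) = M t / \<phi> t"
  proof -
    have "\<phi> t \<noteq> 0" using phipos[of t] by simp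
    thus ?thesis unfolding M_def using phipos[of t] by (simp add: powr_diff)
  qed
  ultimately show ?thesis unfolding p1_def by simp
qed

lemma p1_deriv: "DERIV p1 t :> p2 t"
proof -
  have "DERIV (\<lambda>t. m * M t * D1 t / \<phi> t) t :>
     ((m * p1 t * D1 t + m * M t * D2 t) * \<phi> t - m * M t * D1 t * D1 t) / (\<phi> t * \<phi> t)"
  proof -
    have a: "DERIV (\<lambda>t. M t * D1 t) t :> p1 t * D1 t + D2 t * M t" by (rule DERIV_mult[OF M_deriv d2])
    have b: "DERIV (\<lambda>t. m * (M t * D1 t)) t :> m * (p1 t * D1 t + D2 t * M t)" by (rule DERIV_cmult[OF a])
    have c: "DERIV (\<lambda>t. m * (M t * D1 t) / \<phi> t) t :> (m * (p1 t * D1 t + D2 t * M t) * \<phi> t - m * (M t * D1 t) * D1 t) / (\<phi> t * \<phi> t)"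
      by (rule DERIV_divide[OF b d1]) (use phipos[of t] in simp)
    thus ?thesis by (simp add: algebra_simps)
  qed
  moreover have "((m * p1 t * D1 t + m * M t * D2 t) * \<phi> t - m * M t * D1 t * D1 t) / (\<phi> t * \<phi> t) = p2 t"
    unfolding p1_def p2_def using phipos[of t] by (simp add: field_simps power2_eq_square)
  ultimately show ?thesis unfolding p1_def[abs_def] by simp
qed

lemma ode': "t > 0 \<Longrightarrow> c1 * (p2 t + (N-1)*p1 t/t) + \<alpha>*\<phi> t + \<beta>*(t*D1 t) = 0"
  using ode[of t] unfolding c1_def p1_def p2_def M_def by simp

end

context yode begin

definition "QQ s = exp (k * s) * M (exp s)"
definition "PP s = exp (k * s) * (k * M (exp s) + exp s * p1 (exp s))"
definition "uu s = (exp s)\<^sup>2 * \<phi> (exp s) / M (exp s)"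
definition "HH s = QQ s * (A - \<rho> * uu s)"
definition "EE s = c1/2 * (PP s)\<^sup>2 - c2 * (QQ s)\<^sup>2 * (A/2 - \<rho>*m/(1+m) * uu s)"
definition "Pd s = (c2 * HH s - \<beta>/m * uu s * PP s)/c1"

lemma QQ_pos: "QQ s > 0" unfolding QQ_def using M_pos by simp
lemma uu_pos: "uu s > 0" unfolding uu_def using M_pos[of "exp s"] phipos[of "exp s"] by simp

lemma QQ_deriv: "DERIV QQ s :> PP s"
proof -
  have "DERIV QQ s :> exp (k * s) * k * M (exp s) + p1 (exp s) * exp s * exp (k * s)"
    unfolding QQ_def
    by (rule DERIV_mult[OF _ DERIV_chain2[OF M_deriv DERIV_exp]]) (auto intro!: derivative_eq_intros)
  thus ?thesis unfolding PP_def by (simp add: algebra_simps)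
qed

lemma PP_deriv: "DERIV PP s :> Pd s"
proof -
  define r where "r = exp s"
  have r: "r > 0" unfolding r_def by simp
  have i: "DERIV (\<lambda>s. k * M (exp s) + exp s * p1 (exp s)) s :> k * (p1 r * r) + (r * p1 r + p2 r * r * r)"
    unfolding r_def
    by (intro DERIV_add DERIV_cmult DERIV_chain2[OF M_deriv DERIV_exp] DERIV_mult[OF DERIV_exp DERIV_chain2[OF p1_deriv DERIV_exp], THEN DERIV_cong]) simp
  have "DERIV PP s :> exp (k * s) * k * (k * M r + r * p1 r) + (k * (p1 r * r) + (r * p1 r + p2 r * r * r)) * exp (k * s)"
    unfolding PP_def r_def
    by (rule DERIV_mult[OF _ i[unfolded r_def]]) (auto intro!: derivative_eq_intros)
  moreover have "exp (k * s) * k * (k * M r + r * p1 r) + (k * (p1 r * r) + (r * p1 r + p2 r * r * r)) * exp (k * s)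
     = exp (k * s)*(k*(k*M r + r*p1 r) + r*(k*p1 r + p1 r + r*p2 r))"
    by (simp add: algebra_simps)
  moreover have "\<dots> = (c2 * (exp (k * s)*M r*(A - \<rho>*(r\<^sup>2*\<phi> r/M r))) - \<beta>/m * (r\<^sup>2*\<phi> r/M r) * (exp (k * s)*(k*M r + r*p1 r))) / c1"
    by (rule alg_P[OF r phipos M_pos m_pos c1_pos rel1 rel2 rel3 ode'[OF r] p1_def])
  moreover have "\<dots> = Pd s"
    unfolding Pd_def HH_def QQ_def uu_def PP_def r_def ..
  ultimately show ?thesis by simp
qed

lemma k_alt: "k = 2*m/(1-m)"
  using rel4 m_pos m_lt1 by (simp add: field_simps)

lemma uu_deriv: "DERIV uu s :> (1-m)/m * uu s * PP s / QQ s"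
proof -
  define r where "r = exp s"
  have r: "r > 0" unfolding r_def by simp
  have a: "DERIV (\<lambda>s. (exp s)\<^sup>2) s :> 2 * r * r" unfolding r_def
    by (auto intro!: derivative_eq_intros simp: power2_eq_square)
  have b: "DERIV (\<lambda>s. (exp s)\<^sup>2 * \<phi> (exp s)) s :> 2 * r * r * \<phi> r + D1 r * r * r\<^sup>2"
    using DERIV_mult[OF a DERIV_chain2[OF d1 DERIV_exp]] unfolding r_def by simp
  have c: "DERIV uu s :> ((2 * r * r * \<phi> r + D1 r * r * r\<^sup>2) * M r - r\<^sup>2 * \<phi> r * (p1 r * r)) / (M r * M r)"
    unfolding uu_def using DERIV_divide[OF b DERIV_chain2[OF M_deriv DERIV_exp]] M_pos unfolding r_def
    by (simp add: less_imp_neq[symmetric])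
  have e: "((2 * r * r * \<phi> r + D1 r * r * r\<^sup>2) * M r - r\<^sup>2 * \<phi> r * (p1 r * r)) / (M r * M r)
      = (1-m)/m * uu s * PP s / QQ s"
  proof -
    have "M r > 0" "\<phi> r > 0" "m > 0" "1 - m > 0" "exp (k * s) > 0" using M_pos phipos m_pos m_lt1 by auto
    thus ?thesis unfolding uu_def PP_def QQ_def p1_def k_alt r_def[symmetric]
      by (simp add: field_simps power2_eq_square)
  qed
  show ?thesis using c e by simp
qed

lemma HH_deriv: "DERIV HH s :> PP s * (A - \<rho> * uu s / m)"
proof -
  have "DERIV HH s :> PP s * (A - \<rho> * uu s) + (0 - \<rho> * ((1-m)/m * uu s * PP s / QQ s)) * QQ s"
    unfolding HH_def by (intro DERIV_mult QQ_deriv DERIV_diff DERIV_const DERIV_cmult uu_deriv)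
  moreover have "PP s * (A - \<rho> * uu s) + (0 - \<rho> * ((1-m)/m * uu s * PP s / QQ s)) * QQ s = PP s * (A - \<rho> * uu s / m)"
    using QQ_pos[of s] m_pos by (simp add: field_simps)
  ultimately show ?thesis by simp
qed

lemma EE_deriv: "DERIV EE s :> - (\<beta>/m) * uu s * (PP s)\<^sup>2"
proof -
  have a: "DERIV (\<lambda>s. (PP s)\<^sup>2) s :> 2 * PP s * Pd s"
  proof -
    have "DERIV (\<lambda>s. (PP s)^2) s :> of_nat 2 * (Pd s * PP s^(2 - Suc 0))" by (rule DERIV_power[OF PP_deriv])
    thus ?thesis by (simp add: mult.commute mult.left_commute)
  qed
  have b: "DERIV (\<lambda>s. (QQ s)\<^sup>2) s :> 2 * QQ s * PP s"
  proof -
    have "DERIV (\<lambda>s. (QQ s)^2) s :> of_nat 2 * (PP s * QQ s^(2 - Suc 0))" by (rule DERIV_power[OF QQ_deriv])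
    thus ?thesis by (simp add: mult.commute mult.left_commute)
  qed
  have c: "DERIV (\<lambda>s. A/2 - \<rho>*m/(1+m) * uu s) s :> 0 - \<rho>*m/(1+m) * ((1-m)/m * uu s * PP s / QQ s)"
    by (intro DERIV_diff DERIV_const DERIV_cmult uu_deriv)
  have d: "DERIV (\<lambda>s. c2 * (QQ s)\<^sup>2 * (A/2 - \<rho>*m/(1+m) * uu s)) s :>
      c2 * (2 * QQ s * PP s) * (A/2 - \<rho>*m/(1+m) * uu s) + (0 - \<rho>*m/(1+m) * ((1-m)/m * uu s * PP s / QQ s)) * (c2 * (QQ s)\<^sup>2)"
    by (rule DERIV_mult[OF DERIV_cmult[OF b] c])
  have "DERIV EE s :> c1/2 * (2 * PP s * Pd s) - (c2 * (2 * QQ s * PP s) * (A/2 - \<rho>*m/(1+m) * uu s) + (0 - \<rho>*m/(1+m) * ((1-m)/m * uu s * PP s / QQ s)) * (c2 * (QQ s)\<^sup>2))"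
    unfolding EE_def[abs_def] by (rule DERIV_diff[OF DERIV_cmult[OF a] d])
  moreover have "c1/2 * (2 * PP s * Pd s) - (c2 * (2 * QQ s * PP s) * (A/2 - \<rho>*m/(1+m) * uu s) + (0 - \<rho>*m/(1+m) * ((1-m)/m * uu s * PP s / QQ s)) * (c2 * (QQ s)\<^sup>2)) = - (\<beta>/m) * uu s * (PP s)\<^sup>2"
  proof -
    have nz: "1 + m \<noteq> 0" "m \<noteq> 0" "QQ s \<noteq> 0" "c1 \<noteq> 0" using QQ_pos[of s] m_pos c1_pos by auto
    define iv where "iv = inverse (1+m)"
    have ivm: "(1+m)*iv = 1" unfolding iv_def using nz by simp
    define w where "w = \<rho>*m*iv"
    define z where "z = \<rho>*(1-m)*iv"
    have w': "\<rho>*m/(1+m) = w" unfolding w_def iv_def by (simp add: divide_inverse)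
    have "2*w + z = \<rho>*((1+m)*iv)" unfolding w_def z_def by (simp add: algebra_simps)
    hence wz: "\<rho> = 2*w + z" using ivm by simp
    have t: "(0 - w * ((1-m)/m * uu s * PP s / QQ s)) * (c2 * (QQ s)\<^sup>2) = - c2 * z * uu s * PP s * QQ s"
      unfolding z_def w_def using nz by (simp add: field_simps power2_eq_square)
    have t2: "c1/2 * (2 * PP s * Pd s) = PP s * (c2 * (QQ s * (A - \<rho> * uu s)) - \<beta>/m * uu s * PP s)"
      unfolding Pd_def HH_def using nz by (simp add: field_simps)
    show ?thesis unfolding w' t t2 unfolding wz by (simp add: algebra_simps power2_eq_square)
  qed
  ultimately show ?thesis by simp
qed

end


lemma mvt_bound:
  fixes f f' :: "real \<Rightarrow> real"
  assumes ab: "a \<le> b" and d: "\<And>x. a \<le> x \<Longrightarrow> x \<le> b \<Longrightarrow> DERIV f x :> f' x"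
    and bd: "\<And>x. a \<le> x \<Longrightarrow> x \<le> b \<Longrightarrow> \<bar>f' x\<bar> \<le> K"
  shows "\<bar>f b - f a\<bar> \<le> K * (b - a)"
proof (cases "a = b")
  case True thus ?thesis by simp
next
  case False
  hence "a < b" using ab by simp
  from MVT2[OF this d] obtain z where z: "a < z" "z < b" "f b - f a = (b - a) * f' z" by blast
  have "\<bar>f b - f a\<bar> = (b - a) * \<bar>f' z\<bar>" using z ab by (simp add: abs_mult)
  also have "\<dots> \<le> (b - a) * K" using bd[of z] z ab by (intro mult_left_mono) auto
  finally show ?thesis by (simp add: mult.commute)
qed

context yode begin

lemma kexp_bot: "((\<lambda>s. exp (k * s)) \<longlongrightarrow> 0) at_bot"
proof -
  have "filterlim (\<lambda>s. k * s) at_bot at_bot"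
    unfolding filterlim_at_bot eventually_at_bot_linorder
  proof
    fix Z show "\<exists>N. \<forall>n\<le>N. k * n \<le> Z"
      by (rule exI[of _ "Z/k"]) (use k_pos in \<open>auto simp: field_simps\<close>)
  qed
  from filterlim_compose[OF exp_at_bot this] show ?thesis .
qed

lemma comp_bot:
  fixes g g' :: "real \<Rightarrow> real"
  assumes "\<And>t. DERIV g t :> g' t"
  shows "((\<lambda>s. g (exp s)) \<longlongrightarrow> g 0) at_bot"
  using isCont_tendsto_compose[OF DERIV_isCont[OF assms[of 0]] exp_at_bot] .

lemma QQ_bot: "(QQ \<longlongrightarrow> 0) at_bot"
  using tendsto_mult[OF kexp_bot comp_bot[OF M_deriv]] unfolding QQ_def[abs_def] by simp

lemma br_bot: "((\<lambda>s. k * M (exp s) + exp s * p1 (exp s)) \<longlongrightarrow> k * M 0) at_bot"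
  using tendsto_add[OF tendsto_mult[OF tendsto_const comp_bot[OF M_deriv]] tendsto_mult[OF exp_at_bot comp_bot[OF p1_deriv]], of k]
  by simp

lemma PP_bot: "(PP \<longlongrightarrow> 0) at_bot"
  using tendsto_mult[OF kexp_bot br_bot] unfolding PP_def[abs_def] by simp

lemma uu_bot: "(uu \<longlongrightarrow> 0) at_bot"
proof -
  have "((\<lambda>s. (exp s)\<^sup>2 * \<phi> (exp s) / M (exp s)) \<longlongrightarrow> 0\<^sup>2 * \<phi> 0 / M 0) at_bot"
    by (intro tendsto_intros exp_at_bot comp_bot[OF d1] comp_bot[OF M_deriv]) (use M_pos[of 0] in simp)
  thus ?thesis unfolding uu_def[abs_def] by simp
qed

lemma EE_bot: "(EE \<longlongrightarrow> 0) at_bot"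
proof -
  have "((\<lambda>s. c1/2 * (PP s)\<^sup>2 - c2 * (QQ s)\<^sup>2 * (A/2 - \<rho>*m/(1+m) * uu s)) \<longlongrightarrow> c1/2 * 0\<^sup>2 - c2 * 0\<^sup>2 * (A/2 - \<rho>*m/(1+m) * 0)) at_bot"
    by (intro tendsto_intros PP_bot QQ_bot uu_bot)
  thus ?thesis unfolding EE_def[abs_def] by simp
qed

lemma EE_mono: assumes "s \<le> t" shows "EE t \<le> EE s"
proof (rule DERIV_nonpos_imp_nonincreasing[OF assms])
  fix x
  show "\<exists>y. DERIV EE x :> y \<and> y \<le> 0"
  proof (intro exI conjI)
    show "DERIV EE x :> - (\<beta>/m) * uu x * (PP x)\<^sup>2" by (rule EE_deriv)
    have "0 \<le> (\<beta>/m) * uu x * (PP x)\<^sup>2" using beta m_pos uu_pos[of x] by simp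
    thus "- (\<beta>/m) * uu x * (PP x)\<^sup>2 \<le> 0" by simp
  qed
qed

lemma EE_le0: "EE s \<le> 0"
proof (rule ccontr)
  assume "\<not> EE s \<le> 0"
  hence "0 < EE s" by simp
  from order_tendstoD(2)[OF EE_bot this] obtain N where N: "\<And>t. t \<le> N \<Longrightarrow> EE t < EE s"
    unfolding eventually_at_bot_linorder by blast
  have "EE (min N s) < EE s" by (rule N) simp
  moreover have "EE s \<le> EE (min N s)" by (rule EE_mono) simp
  ultimately show False by simp
qed

lemma EE_neg: "\<exists>s1. EE s1 < 0"
proof -
  have "0 < k * M 0" using k_pos M_pos by simp
  from order_tendstoD(1)[OF br_bot this] obtain N where N: "\<And>t. t \<le> N \<Longrightarrow> 0 < k * M (exp t) + exp t * p1 (exp t)"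
    unfolding eventually_at_bot_linorder by blast
  have "N - 1 < N" by simp
  from MVT2[OF this, of EE "\<lambda>s. - (\<beta>/m) * uu s * (PP s)\<^sup>2"] EE_deriv obtain z where
    z: "N - 1 < z" "z < N" "EE N - EE (N-1) = (N - (N-1)) * (- (\<beta>/m) * uu z * (PP z)\<^sup>2)" by blast
  have "PP z > 0" unfolding PP_def using N[of z] z by simp
  hence "(\<beta>/m) * uu z * (PP z)\<^sup>2 > 0" using beta m_pos uu_pos[of z] by simp
  hence "EE N < EE (N-1)" using z by simp
  thus ?thesis using EE_le0[of "N-1"] by (intro exI[of _ N]) simp
qed

end

lemma abs_bd: fixes A y Y :: real assumes "0 < y" "y < Y" "0 < A" shows "\<bar>A - y\<bar> \<le> A + Y"
  using assms by (simp add: abs_le_iff)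

context yode begin

lemma uu_QQ: "uu s = QQ s powr ((1-m)/m)"
proof -
  define f where "f = \<phi> (exp s)"
  have f: "f > 0" unfolding f_def using phipos by simp
  have "QQ s powr ((1-m)/m) = (exp (k * s) * f powr m) powr ((1-m)/m)" unfolding QQ_def M_def f_def ..
  also have "\<dots> = exp (k * s) powr ((1-m)/m) * (f powr m) powr ((1-m)/m)"
    using f by (simp add: powr_mult)
  also have "\<dots> = exp (k * s * ((1-m)/m)) * f powr (m * ((1-m)/m))"
    by (simp add: exp_powr_real powr_powr)
  also have "k * s * ((1-m)/m) = s * ((1-m)*k/m)" by simp
  also have "\<dots> = 2 * s" using rel4 by simp
  also have "m * ((1-m)/m) = 1 - m" using m_pos by simp
  also have "f powr (1 - m) = f / f powr m" using f by (simp add: powr_diff)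
  also have "exp (2 * s) = (exp s)\<^sup>2" by (rule exp_double)
  finally show ?thesis unfolding uu_def M_def f_def by simp
qed

lemma QQ_uu: "QQ s = uu s powr (m/(1-m))"
proof -
  have "uu s powr (m/(1-m)) = QQ s powr ((1-m)/m * (m/(1-m)))" unfolding uu_QQ by (simp add: powr_powr)
  also have "(1-m)/m * (m/(1-m)) = 1" using m_pos m_lt1 by simp
  finally show ?thesis using QQ_pos[of s] by simp
qed

definition "s1 = (SOME s. EE s < 0)"
definition "cc = EE s1"
lemma cc_neg: "cc < 0" unfolding cc_def s1_def using EE_neg by (rule someI_ex)
lemma EE_after: "s1 \<le> s \<Longrightarrow> EE s \<le> cc" unfolding cc_def by (rule EE_mono)

definition "w = \<rho>*m/(1+m)"
lemma w_pos: "w > 0" unfolding w_def using rho m_pos by simp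
lemma EE_w: "EE s = c1/2 * (PP s)\<^sup>2 - c2 * (QQ s)\<^sup>2 * (A/2 - w * uu s)"
  unfolding EE_def w_def ..

definition "U = A/(2*w)"
lemma U_pos: "U > 0" unfolding U_def using A_pos w_pos by simp

lemma uu_lt_U: assumes "s1 \<le> s" shows "uu s < U"
proof -
  have "c1/2 * (PP s)\<^sup>2 - c2 * (QQ s)\<^sup>2 * (A/2 - w * uu s) < 0"
    using EE_after[OF assms] cc_neg EE_w[of s] by simp
  moreover have "0 \<le> c1/2 * (PP s)\<^sup>2" using c1_pos by simp
  ultimately have "0 < c2 * (QQ s)\<^sup>2 * (A/2 - w * uu s)" by linarith
  moreover have "0 < c2 * (QQ s)\<^sup>2" using c2_pos QQ_pos[of s] by simp
  ultimately have "0 < A/2 - w * uu s" by (simp add: zero_less_mult_iff)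
  hence "w * uu s < A/2" by simp
  thus ?thesis unfolding U_def using w_pos by (simp add: field_simps)
qed

definition "q2lo = -2*cc/(c2*A)"
lemma q2lo_pos: "q2lo > 0" unfolding q2lo_def using cc_neg c2_pos A_pos by (intro divide_pos_pos) auto

lemma QQ_sq_lo: assumes "s1 \<le> s" shows "q2lo \<le> (QQ s)\<^sup>2"
proof -
  have "c1/2 * (PP s)\<^sup>2 - c2 * (QQ s)\<^sup>2 * (A/2 - w * uu s) \<le> cc"
    using EE_after[OF assms] EE_w[of s] by simp
  moreover have "0 \<le> c1/2 * (PP s)\<^sup>2" using c1_pos by simp
  moreover have "c2 * (QQ s)\<^sup>2 * (A/2 - w * uu s) \<le> c2 * (QQ s)\<^sup>2 * (A/2)"
    using w_pos uu_pos[of s] c2_pos by (intro mult_left_mono) auto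
  ultimately have "- cc \<le> c2 * A / 2 * (QQ s)\<^sup>2" by (simp add: algebra_simps)
  thus ?thesis unfolding q2lo_def using c2_pos A_pos by (simp add: field_simps)
qed

definition "qlo = sqrt q2lo"
lemma qlo_pos: "qlo > 0" unfolding qlo_def using q2lo_pos by simp
lemma QQ_lo: assumes "s1 \<le> s" shows "qlo \<le> QQ s"
proof -
  have "sqrt q2lo \<le> sqrt ((QQ s)\<^sup>2)" using QQ_sq_lo[OF assms] by (rule real_sqrt_le_mono)
  thus ?thesis unfolding qlo_def using QQ_pos[of s] by simp
qed

definition "QB = U powr (m/(1-m))"
lemma QQ_hi: assumes "s1 \<le> s" shows "QQ s \<le> QB"
  unfolding QB_def QQ_uu using uu_lt_U[OF assms] uu_pos[of s] m_pos m_lt1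
  by (intro powr_mono2) auto

definition "ulo = qlo powr ((1-m)/m)"
lemma ulo_pos: "ulo > 0" unfolding ulo_def using qlo_pos by simp
lemma uu_lo: assumes "s1 \<le> s" shows "ulo \<le> uu s"
  unfolding ulo_def uu_QQ using QQ_lo[OF assms] qlo_pos m_pos m_lt1
  by (intro powr_mono2) auto

lemma QB_pos: "QB > 0" unfolding QB_def using U_pos by simp

definition "PB = sqrt (c2*QB\<^sup>2*A/c1)"
lemma PP_hi: assumes "s1 \<le> s" shows "\<bar>PP s\<bar> \<le> PB"
proof -
  have "c1/2 * (PP s)\<^sup>2 - c2 * (QQ s)\<^sup>2 * (A/2 - w * uu s) \<le> 0"
    using EE_le0[of s] EE_w[of s] by simp
  moreover have "c2 * (QQ s)\<^sup>2 * (A/2 - w * uu s) \<le> c2 * (QQ s)\<^sup>2 * (A/2)"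
    using w_pos uu_pos[of s] c2_pos by (intro mult_left_mono) auto
  moreover have "(QQ s)\<^sup>2 \<le> QB\<^sup>2" using QQ_hi[OF assms] QQ_pos[of s] by (intro power_mono) auto
  hence "c2 * (QQ s)\<^sup>2 * (A/2) \<le> c2 * QB\<^sup>2 * (A/2)" using c2_pos A_pos by (intro mult_right_mono mult_left_mono) auto
  ultimately have "c1/2 * (PP s)\<^sup>2 \<le> c2 * QB\<^sup>2 * (A/2)" by linarith
  hence "(PP s)\<^sup>2 \<le> c2*QB\<^sup>2*A/c1" using c1_pos by (simp add: field_simps)
  hence "sqrt ((PP s)\<^sup>2) \<le> PB" unfolding PB_def by (rule real_sqrt_le_mono)
  thus ?thesis by simp
qed

definition "HB = QB*(A + \<rho>*U)"
lemma HH_hi: assumes "s1 \<le> s" shows "\<bar>HH s\<bar> \<le> HB"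
proof -
  have "\<rho>*uu s < \<rho>*U" using uu_lt_U[OF assms] rho by simp
  moreover have "0 < \<rho>*uu s" using uu_pos[of s] rho by simp
  ultimately have "\<bar>A - \<rho> * uu s\<bar> \<le> A + \<rho>*U" using A_pos
    by (auto simp: abs_le_iff)
  hence "QQ s * \<bar>A - \<rho> * uu s\<bar> \<le> QB * (A + \<rho>*U)"
    using QQ_hi[OF assms] QQ_pos[of s] by (intro mult_mono) auto
  thus ?thesis unfolding HH_def HB_def using QQ_pos[of s] by (simp add: abs_mult)
qed

definition "KP = (c2*HB + \<beta>/m*U*PB)/c1"
lemma Pd_hi: assumes "s1 \<le> s" shows "\<bar>Pd s\<bar> \<le> KP"
proof -
  have t: "\<bar>c2 * HH s - \<beta>/m * uu s * PP s\<bar> \<le> \<bar>c2 * HH s\<bar> + \<bar>\<beta>/m * uu s * PP s\<bar>"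
    by (rule abs_triangle_ineq4)
  have a1: "\<bar>c2 * HH s\<bar> = c2 * \<bar>HH s\<bar>" using c2_pos by (simp add: abs_mult)
  have a2: "\<bar>\<beta>/m * uu s * PP s\<bar> = (\<beta>/m * uu s) * \<bar>PP s\<bar>" using beta m_pos uu_pos[of s] by (simp add: abs_mult)
  have a3: "c2 * \<bar>HH s\<bar> \<le> c2 * HB" using HH_hi[OF assms] c2_pos by (intro mult_left_mono) auto
  have a4: "(\<beta>/m * uu s) * \<bar>PP s\<bar> \<le> (\<beta>/m * U) * PB"
  proof (rule mult_mono)
    show "\<beta>/m * uu s \<le> \<beta>/m * U" using uu_lt_U[OF assms] beta m_pos by (intro mult_left_mono) auto
    show "\<bar>PP s\<bar> \<le> PB" by (rule PP_hi[OF assms])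
    show "0 \<le> \<beta>/m * U" using beta m_pos U_pos by simp
  qed (rule abs_ge_zero)
  have "\<bar>c2 * HH s - \<beta>/m * uu s * PP s\<bar> \<le> c2*HB + \<beta>/m*U*PB"
    using t[unfolded a1 a2] add_mono[OF a3 a4] by (rule order_trans)
  hence "\<bar>c2 * HH s - \<beta>/m * uu s * PP s\<bar> / c1 \<le> (c2*HB + \<beta>/m*U*PB) / c1"
    using c1_pos by (intro divide_right_mono) auto
  moreover have "\<bar>Pd s\<bar> = \<bar>c2 * HH s - \<beta>/m * uu s * PP s\<bar> / c1"
    unfolding Pd_def abs_divide using c1_pos by simp
  ultimately show ?thesis unfolding KP_def by simp
qed

definition "K2 = A + \<rho>*U/m"
lemma HHd_hi: assumes "s1 \<le> s" shows "\<bar>PP s * (A - \<rho> * uu s / m)\<bar> \<le> \<bar>PP s\<bar> * K2"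
proof -
  have "\<rho>*uu s < \<rho>*U" using uu_lt_U[OF assms] rho by simp
  hence y1: "\<rho>*uu s/m < \<rho>*U/m" using m_pos by (rule divide_strict_right_mono)
  have y0: "0 < \<rho>*uu s/m" using uu_pos[of s] rho m_pos by simp
  have "\<bar>A - \<rho> * uu s / m\<bar> \<le> K2" unfolding K2_def by (rule abs_bd[OF y0 y1 A_pos])
  hence "\<bar>PP s\<bar> * \<bar>A - \<rho> * uu s / m\<bar> \<le> \<bar>PP s\<bar> * K2" by (rule mult_left_mono) simp
  thus ?thesis by (simp add: abs_mult)
qed

lemma EE_lo: assumes "s1 \<le> s" shows "- c2 * QB\<^sup>2 * A / 2 \<le> EE s"
proof -
  have "c2 * (QQ s)\<^sup>2 * (A/2 - w * uu s) \<le> c2 * (QQ s)\<^sup>2 * (A/2)"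
    using w_pos uu_pos[of s] c2_pos by (intro mult_left_mono) auto
  moreover have "(QQ s)\<^sup>2 \<le> QB\<^sup>2" using QQ_hi[OF assms] QQ_pos[of s] by (intro power_mono) auto
  hence "c2 * (QQ s)\<^sup>2 * (A/2) \<le> c2 * QB\<^sup>2 * (A/2)" using c2_pos A_pos by (intro mult_right_mono mult_left_mono) auto
  moreover have "0 \<le> c1/2 * (PP s)\<^sup>2" using c1_pos by simp
  ultimately show ?thesis unfolding EE_w by linarith
qed

end

context yode begin

lemma EE_conv: "\<exists>L. (EE \<longlongrightarrow> L) at_top"
proof -
  define L where "L = Inf (EE ` {s1..})"
  have ne: "EE ` {s1..} \<noteq> {}" by auto
  have bdd: "bdd_below (EE ` {s1..})"
    using EE_lo by (intro bdd_belowI[of _ "- c2 * QB\<^sup>2 * A / 2"]) blast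
  have "(EE \<longlongrightarrow> L) at_top"
  proof (rule order_tendstoI)
    fix a assume a: "a < L"
    show "eventually (\<lambda>s. a < EE s) at_top"
      unfolding eventually_at_top_linorder
    proof (intro exI allI impI)
      fix s assume "s1 \<le> s"
      hence "L \<le> EE s" unfolding L_def using bdd by (intro cInf_lower) auto
      thus "a < EE s" using a by simp
    qed
  next
    fix a assume a: "L < a"
    from cInf_lessD[OF ne a[unfolded L_def]] obtain t where t: "s1 \<le> t" "EE t < a" by auto
    show "eventually (\<lambda>s. EE s < a) at_top"
      unfolding eventually_at_top_linorder
    proof (intro exI allI impI)
      fix s assume "t \<le> s"
      hence "EE s \<le> EE t" by (rule EE_mono)
      thus "EE s < a" using t by simp
    qed
  qed
  thus ?thesis by blast
qed

lemma KP_nonneg: "0 \<le> KP" using Pd_hi[of s1] by simp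

lemma PP_lim: "(PP \<longlongrightarrow> 0) at_top"
proof (rule tendstoI)
  fix \<epsilon> :: real assume e: "\<epsilon> > 0"
  show "eventually (\<lambda>s. dist (PP s) 0 < \<epsilon>) at_top"
  proof (rule ccontr)
    assume nev: "\<not> eventually (\<lambda>s. dist (PP s) 0 < \<epsilon>) at_top"
    obtain L where L: "(EE \<longlongrightarrow> L) at_top" using EE_conv by blast
    define KK where "KK = KP + 1"
    have KK: "KK > 0" unfolding KK_def using KP_nonneg by simp
    define \<delta> where "\<delta> = \<epsilon> / (2*KK)"
    have d: "\<delta> > 0" unfolding \<delta>_def using e KK by simp
    define \<eta> where "\<eta> = \<delta> * (\<beta>/m) * (ulo * (\<epsilon>/2)\<^sup>2)"
    have eta: "\<eta> > 0" unfolding \<eta>_def using d beta m_pos ulo_pos e by simp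
    have "eventually (\<lambda>s. dist (EE s) L < \<eta>/2) at_top" using L eta by (intro tendstoD) auto
    then obtain S0 where S0: "\<And>s. S0 \<le> s \<Longrightarrow> \<bar>EE s - L\<bar> < \<eta>/2"
      unfolding eventually_at_top_linorder dist_real_def by blast
    from nev have "\<forall>N. \<exists>n\<ge>N. \<not> \<bar>PP n\<bar> < \<epsilon>"
      unfolding eventually_at_top_linorder dist_real_def by auto
    then obtain s where s: "max S0 s1 \<le> s" "\<not> \<bar>PP s\<bar> < \<epsilon>" by blast
    have s1s: "s1 \<le> s" using s by simp
    have near: "\<bar>PP t\<bar> \<ge> \<epsilon>/2" if t: "s \<le> t" "t \<le> s + \<delta>" for t
    proof -
      have "\<bar>PP t - PP s\<bar> \<le> KP * (t - s)"
        by (rule mvt_bound[OF t(1)]) (use PP_deriv Pd_hi s1s in auto)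
      also have "\<dots> \<le> KK * \<delta>" unfolding KK_def using t KP_nonneg d by (intro mult_mono) auto
      also have "KK * \<delta> = \<epsilon>/2" unfolding \<delta>_def using KK by simp
      finally show ?thesis using s(2) by linarith
    qed
    have "s < s + \<delta>" using d by simp
    from MVT2[OF this, of EE "\<lambda>s. - (\<beta>/m) * uu s * (PP s)\<^sup>2"] EE_deriv obtain z where
      z: "s < z" "z < s + \<delta>" "EE (s+\<delta>) - EE s = (s + \<delta> - s) * (- (\<beta>/m) * uu z * (PP z)\<^sup>2)" by blast
    have "(\<epsilon>/2)\<^sup>2 \<le> \<bar>PP z\<bar>\<^sup>2" using near[of z] z e by (intro power_mono) auto
    hence pz: "(\<epsilon>/2)\<^sup>2 \<le> (PP z)\<^sup>2" by simp
    have "ulo * (\<epsilon>/2)\<^sup>2 \<le> uu z * (PP z)\<^sup>2"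
      using uu_lo[of z] z s1s pz ulo_pos by (intro mult_mono) auto
    hence "\<delta> * (\<beta>/m) * (ulo * (\<epsilon>/2)\<^sup>2) \<le> \<delta> * (\<beta>/m) * (uu z * (PP z)\<^sup>2)"
      using d beta m_pos by (intro mult_left_mono) auto
    hence "\<eta> \<le> EE s - EE (s+\<delta>)" unfolding \<eta>_def using z(3) by (simp add: algebra_simps)
    moreover have "\<bar>EE s - L\<bar> < \<eta>/2" using S0 s by simp
    moreover have "\<bar>EE (s+\<delta>) - L\<bar> < \<eta>/2" using S0 s d by simp
    ultimately show False by linarith
  qed
qed

lemma HH_lim: "(HH \<longlongrightarrow> 0) at_top"
proof (rule tendstoI)
  fix \<epsilon> :: real assume e: "\<epsilon> > 0"
  show "eventually (\<lambda>s. dist (HH s) 0 < \<epsilon>) at_top"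
  proof (rule ccontr)
    assume nev: "\<not> eventually (\<lambda>s. dist (HH s) 0 < \<epsilon>) at_top"
    have K2: "K2 \<ge> 0" unfolding K2_def using A_pos rho U_pos m_pos by simp
    define D where "D = c2*K2 + \<beta>/m*U + 2*c1"
    have D: "D > 0" unfolding D_def using K2 c2_pos beta m_pos U_pos c1_pos by (simp add: add_nonneg_pos)
    define \<delta> where "\<delta> = c2*\<epsilon>/(2*D)"
    have d: "\<delta> > 0" unfolding \<delta>_def using c2_pos e D by simp
    have dD: "\<delta> * D = c2*\<epsilon>/2" unfolding \<delta>_def using D by simp
    have "eventually (\<lambda>s. dist (PP s) 0 < \<delta>) at_top" using PP_lim d by (rule tendstoD)
    then obtain S0 where S0: "\<And>s. S0 \<le> s \<Longrightarrow> \<bar>PP s\<bar> < \<delta>"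
      unfolding eventually_at_top_linorder dist_real_def by auto
    from nev have "\<forall>N. \<exists>n\<ge>N. \<not> \<bar>HH n\<bar> < \<epsilon>"
      unfolding eventually_at_top_linorder dist_real_def by auto
    then obtain s where s: "max S0 s1 \<le> s" "\<not> \<bar>HH s\<bar> < \<epsilon>" by blast
    have s1s: "s1 \<le> s" and s0s: "S0 \<le> s" using s by auto
    have near: "\<bar>HH t\<bar> \<ge> \<epsilon> - \<delta> * K2" if t: "s \<le> t" "t \<le> s + 1" for t
    proof -
      have "\<bar>HH t - HH s\<bar> \<le> (\<delta> * K2) * (t - s)"
      proof (rule mvt_bound[OF t(1)])
        fix x assume x: "s \<le> x" "x \<le> t"
        show "DERIV HH x :> PP x * (A - \<rho> * uu x / m)" by (rule HH_deriv)
        have "\<bar>PP x * (A - \<rho> * uu x / m)\<bar> \<le> \<bar>PP x\<bar> * K2" using HHd_hi[of x] s1s x by simp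
        also have "\<dots> \<le> \<delta> * K2" using S0[of x] s0s x K2 by (intro mult_right_mono) auto
        finally show "\<bar>PP x * (A - \<rho> * uu x / m)\<bar> \<le> \<delta> * K2" .
      qed
      also have "\<dots> \<le> (\<delta> * K2) * 1" using t d K2 by (intro mult_left_mono) auto
      finally show ?thesis using s(2) by linarith
    qed
    have "s < s + 1" by simp
    from MVT2[OF this, of PP Pd] PP_deriv obtain z where
      z: "s < z" "z < s + 1" "PP (s+1) - PP s = (s + 1 - s) * Pd z" by blast
    have zs: "s1 \<le> z" "S0 \<le> z" using z s1s s0s by auto
    have "\<bar>Pd z\<bar> < 2 * \<delta>" using z(3) S0[of s] S0[of "s+1"] s0s by simp
    hence "c1 * \<bar>Pd z\<bar> < c1 * (2 * \<delta>)" using c1_pos by simp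
    moreover have "c1 * \<bar>Pd z\<bar> = \<bar>c2 * HH z - \<beta>/m * uu z * PP z\<bar>"
      unfolding Pd_def abs_divide using c1_pos by simp
    moreover have "\<bar>c2 * HH z - \<beta>/m * uu z * PP z\<bar> \<ge> \<bar>c2 * HH z\<bar> - \<bar>\<beta>/m * uu z * PP z\<bar>"
      by (rule abs_triangle_ineq2)
    moreover have "\<bar>c2 * HH z\<bar> \<ge> c2 * (\<epsilon> - \<delta> * K2)"
      using near[of z] z c2_pos by (simp add: abs_mult)
    moreover have "\<bar>\<beta>/m * uu z * PP z\<bar> \<le> \<beta>/m * U * \<delta>"
    proof -
      have "\<bar>\<beta>/m * uu z * PP z\<bar> = (\<beta>/m * uu z) * \<bar>PP z\<bar>" using beta m_pos uu_pos[of z] by (simp add: abs_mult)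
      also have "\<dots> \<le> (\<beta>/m * U) * \<delta>"
      proof (rule mult_mono)
        show "\<beta>/m * uu z \<le> \<beta>/m * U" using uu_lt_U[OF zs(1)] beta m_pos by (intro mult_left_mono) auto
        show "\<bar>PP z\<bar> \<le> \<delta>" using S0[OF zs(2)] by simp
        show "0 \<le> \<beta>/m * U" using beta m_pos U_pos by simp
      qed (rule abs_ge_zero)
      finally show ?thesis .
    qed
    moreover have "c2 * (\<epsilon> - \<delta> * K2) - \<beta>/m * U * \<delta> - c1 * (2 * \<delta>) = c2*\<epsilon>/2"
      using dD unfolding D_def by (simp add: algebra_simps)
    moreover have "c2*\<epsilon>/2 > 0" using c2_pos e by simp
    ultimately show False by linarith
  qed
qed

lemma uu_lim: "(uu \<longlongrightarrow> A/\<rho>) at_top"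
proof (rule tendstoI)
  fix \<epsilon> :: real assume e: "\<epsilon> > 0"
  have "eventually (\<lambda>s. dist (HH s) 0 < \<epsilon> * \<rho> * qlo) at_top"
    using HH_lim e rho qlo_pos by (intro tendstoD) auto
  then obtain S0 where S0: "\<And>s. S0 \<le> s \<Longrightarrow> \<bar>HH s\<bar> < \<epsilon> * \<rho> * qlo"
    unfolding eventually_at_top_linorder dist_real_def by auto
  show "eventually (\<lambda>s. dist (uu s) (A/\<rho>) < \<epsilon>) at_top"
    unfolding eventually_at_top_linorder
  proof (intro exI allI impI)
    fix s assume "max S0 s1 \<le> s"
    hence s: "S0 \<le> s" "s1 \<le> s" by auto
    have "\<bar>HH s\<bar> = QQ s * \<bar>A - \<rho> * uu s\<bar>"
      unfolding HH_def using QQ_pos[of s] by (simp add: abs_mult)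
    also have "A - \<rho> * uu s = \<rho> * (A/\<rho> - uu s)" using rho by (simp add: field_simps)
    also have "\<bar>\<rho> * (A/\<rho> - uu s)\<bar> = \<rho> * \<bar>uu s - A/\<rho>\<bar>" using rho by (simp add: abs_mult abs_minus_commute)
    finally have "\<bar>HH s\<bar> = QQ s * \<rho> * \<bar>uu s - A/\<rho>\<bar>" by simp
    moreover have "qlo * \<rho> * \<bar>uu s - A/\<rho>\<bar> \<le> QQ s * \<rho> * \<bar>uu s - A/\<rho>\<bar>"
      using QQ_lo[OF s(2)] rho by (intro mult_right_mono) auto
    ultimately have "qlo * \<rho> * \<bar>uu s - A/\<rho>\<bar> < \<epsilon> * \<rho> * qlo" using S0[OF s(1)] by simp
    hence "\<bar>uu s - A/\<rho>\<bar> < \<epsilon>" using qlo_pos rho by (simp add: mult.commute mult.left_commute)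
    thus "dist (uu s) (A/\<rho>) < \<epsilon>" by (simp add: dist_real_def)
  qed
qed

lemma final_lim: "((\<lambda>r. r\<^sup>2 * \<phi> r powr (1-m)) \<longlongrightarrow> A/\<rho>) at_top"
proof -
  have l: "((\<lambda>r. uu (ln r)) \<longlongrightarrow> A/\<rho>) at_top"
    by (rule filterlim_compose[OF uu_lim ln_at_top])
  have "eventually (\<lambda>r. uu (ln r) = r\<^sup>2 * \<phi> r powr (1-m)) at_top"
    using eventually_gt_at_top[of 0]
  proof eventually_elim
    case (elim r)
    have "\<phi> r powr (1-m) = \<phi> r / \<phi> r powr m" using phipos[of r] by (simp add: powr_diff)
    thus ?case unfolding uu_def M_def using elim by simp
  qed
  from tendsto_cong[OF this] l show ?thesis by simp
qed

end


lemma powr_derivs: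
  fixes \<phi> D1 D2 :: "real \<Rightarrow> real" and m :: real
  assumes phipos: "\<And>t. \<phi> t > 0" and d1: "\<And>t. DERIV \<phi> t :> D1 t" and d2: "\<And>t. DERIV D1 t :> D2 t"
  shows "DERIV (\<lambda>t. \<phi> t powr m) t :> m * (\<phi> t powr m) * D1 t / \<phi> t"
    and "DERIV (\<lambda>t. m * (\<phi> t powr m) * D1 t / \<phi> t) t :> m * (\<phi> t powr m) * ((m-1)*(D1 t)\<^sup>2 + \<phi> t * D2 t)/(\<phi> t)\<^sup>2"
proof -
  define M where "M = (\<lambda>t. \<phi> t powr m)"
  define p1 where "p1 = (\<lambda>t. m * M t * D1 t / \<phi> t)"
  have M_deriv: "DERIV M t :> p1 t" for t
  proof -
    have "DERIV M t :> m * (\<phi> t) powr (m - of_nat 1) * D1 t"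
      unfolding M_def by (rule DERIV_fun_powr[OF d1 phipos])
    moreover have "\<phi> t powr (m - of_nat 1) = M t / \<phi> t"
    proof -
      have "\<phi> t \<noteq> 0" using phipos[of t] by simp
      thus ?thesis unfolding M_def using phipos[of t] by (simp add: powr_diff)
    qed
    ultimately show ?thesis unfolding p1_def by simp
  qed
  show "DERIV (\<lambda>t. \<phi> t powr m) t :> m * (\<phi> t powr m) * D1 t / \<phi> t"
    using M_deriv[of t] unfolding p1_def M_def by simp
  have a: "DERIV (\<lambda>t. M t * D1 t) t :> p1 t * D1 t + D2 t * M t" by (rule DERIV_mult[OF M_deriv d2])
  have b: "DERIV (\<lambda>t. m * (M t * D1 t)) t :> m * (p1 t * D1 t + D2 t * M t)" by (rule DERIV_cmult[OF a])
  have c: "DERIV (\<lambda>t. m * (M t * D1 t) / \<phi> t) t :> (m * (p1 t * D1 t + D2 t * M t) * \<phi> t - m * (M t * D1 t) * D1 t) / (\<phi> t * \<phi> t)"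
    by (rule DERIV_divide[OF b d1]) (use phipos[of t] in simp)
  moreover have "(m * (p1 t * D1 t + D2 t * M t) * \<phi> t - m * (M t * D1 t) * D1 t) / (\<phi> t * \<phi> t) = m * M t * ((m-1)*(D1 t)\<^sup>2 + \<phi> t * D2 t)/(\<phi> t)\<^sup>2"
    unfolding p1_def using phipos[of t] by (simp add: field_simps power2_eq_square)
  moreover have "(\<lambda>t. m * (M t * D1 t) / \<phi> t) = (\<lambda>t. m * (\<phi> t powr m) * D1 t / \<phi> t)"
    unfolding M_def by (simp only: mult.assoc)
  moreover have "m * M t * ((m-1)*(D1 t)\<^sup>2 + \<phi> t * D2 t)/(\<phi> t)\<^sup>2 = m * (\<phi> t powr m) * ((m-1)*(D1 t)\<^sup>2 + \<phi> t * D2 t)/(\<phi> t)\<^sup>2"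
    unfolding M_def ..
  ultimately show "DERIV (\<lambda>t. m * (\<phi> t powr m) * D1 t / \<phi> t) t :> m * (\<phi> t powr m) * ((m-1)*(D1 t)\<^sup>2 + \<phi> t * D2 t)/(\<phi> t)\<^sup>2"
    by metis
qed

theorem corollary1p4:
  fixes v :: "real^'n \<Rightarrow> real" and m \<rho> \<beta> \<alpha> :: real
  assumes n3: "CARD('n) \<ge> 3"
    and m_def: "m = (real CARD('n) - 2) / (real CARD('n) + 2)"
    and rho_pos: "\<rho> > 0"
    and beta: "\<beta> > \<rho> / 2"
    and alpha_def: "\<alpha> = (2 * \<beta> + \<rho>) / (1 - m)"
    and radial: "\<forall>x y. norm x = norm y \<longrightarrow> v x = v y"
    and pos: "\<forall>x. v x > 0"
    and reg: "C2 v"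
    and eq: "\<forall>x. (real CARD('n) - 1) / m * laplacian (\<lambda>y. v y powr m) x
                 + \<alpha> * v x + \<beta> * radial_deriv v x = 0"
  shows "\<forall>e::real^'n. norm e = 1 \<longrightarrow>
           ((\<lambda>r. r\<^sup>2 * v (r *\<^sub>R e) powr (4 / (real CARD('n) + 2)))
              \<longlongrightarrow> (real CARD('n) - 1) * (real CARD('n) - 2) / \<rho>) at_top"
proof -
  obtain i0 :: 'n where True by blast
  define N where "N = real CARD('n)"
  define \<phi> where "\<phi> = (\<lambda>t. v (t *\<^sub>R axis i0 1))"
  define D1 where "D1 = (\<lambda>t. partial i0 v (t *\<^sub>R axis i0 1))"
  define D2 where "D2 = (\<lambda>t. partial i0 (partial i0 v) (t *\<^sub>R axis i0 1))"
  have pe1: "partials_exist v" and pe2: "partials_exist (partial i0 v)" using reg unfolding C2_def by auto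
  have phipos: "\<And>t. \<phi> t > 0" unfolding \<phi>_def using pos by simp
  have d1: "\<And>t. DERIV \<phi> t :> D1 t" unfolding \<phi>_def D1_def by (rule axis_deriv[OF pe1])
  have d2: "\<And>t. DERIV D1 t :> D2 t" unfolding D2_def D1_def by (rule axis_deriv[OF pe2])
  have N3: "N \<ge> 3" unfolding N_def using n3 by simp
  have betapos: "\<beta> > 0" using beta rho_pos by simp
  define g where "g = (\<lambda>y. v y powr m)"
  have grad: "\<forall>x y. norm x = norm y \<longrightarrow> g x = g y" unfolding g_def using radial by metis
  have gphi: "(\<lambda>t. g (t *\<^sub>R axis i0 1)) = (\<lambda>t. \<phi> t powr m)" unfolding g_def \<phi>_def ..
  have ode: "(N-1)/m * (m * (\<phi> t powr m) * ((m-1)*(D1 t)\<^sup>2 + \<phi> t * D2 t)/(\<phi> t)\<^sup>2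
                 + (N-1) * (m * (\<phi> t powr m) * D1 t / \<phi> t) / t) + \<alpha> * \<phi> t + \<beta> * (t * D1 t) = 0"
    if t: "t > 0" for t
  proof -
    have L: "laplacian g (t *\<^sub>R axis i0 1) = m * (\<phi> t powr m) * ((m-1)*(D1 t)\<^sup>2 + \<phi> t * D2 t)/(\<phi> t)\<^sup>2
                 + (N-1) * (m * (\<phi> t powr m) * D1 t / \<phi> t) / t"
      unfolding N_def
      by (rule lap_radial[OF grad _ _ t]) (use powr_derivs[OF phipos d1 d2] gphi in simp_all)
    have R: "radial_deriv v (t *\<^sub>R axis i0 1) = t * D1 t" unfolding D1_def by (rule radial_deriv_axis)
    have "(N-1)/m * laplacian g (t *\<^sub>R axis i0 1) + \<alpha> * v (t *\<^sub>R axis i0 1) + \<beta> * radial_deriv v (t *\<^sub>R axis i0 1) = 0"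
      using eq unfolding g_def N_def by simp
    thus ?thesis unfolding L R \<phi>_def by simp
  qed
  interpret Y: yode N m \<rho> \<beta> \<alpha> \<phi> D1 D2
    by unfold_locales (use N3 m_def N_def rho_pos betapos alpha_def phipos d1 d2 ode in auto)
  have lim: "((\<lambda>r. r\<^sup>2 * \<phi> r powr (1-m)) \<longlongrightarrow> (N-1)*(N-2)/\<rho>) at_top"
    using Y.final_lim unfolding Y.A_def .
  have om: "1 - m = 4 / (N + 2)" using Y.one_m .
  show ?thesis
  proof (intro allI impI)
    fix e :: "real^'n" assume e: "norm e = 1"
    have "eventually (\<lambda>r. r\<^sup>2 * \<phi> r powr (1-m) = r\<^sup>2 * v (r *\<^sub>R e) powr (4 / (real CARD('n) + 2))) at_top"
      using eventually_gt_at_top[of 0]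
    proof eventually_elim
      case (elim r)
      have "norm (r *\<^sub>R e) = norm (r *\<^sub>R axis i0 (1::real))" using e elim by (simp add: norm_axis_1)
      hence "v (r *\<^sub>R e) = \<phi> r" unfolding \<phi>_def using radial by blast
      thus ?case using om unfolding N_def by simp
    qed
    from tendsto_cong[OF this] lim show "((\<lambda>r. r\<^sup>2 * v (r *\<^sub>R e) powr (4 / (real CARD('n) + 2)))
              \<longlongrightarrow> (real CARD('n) - 1) * (real CARD('n) - 2) / \<rho>) at_top"
      unfolding N_def by simp
  qed
qed


end
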